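(* Let $G$ be a finite Abelian group of odd cardinality. Then $\mathrm{ms}_r(G)=\widetilde{\mathrm{ms}}_r(G)>\frac{1}{r^2}$ for every integer $r\ge 2$.
   Context: $G$ is written additively and carries its normalized counting (Haar) measure $\mu(A)=|A|/|G|$. For $A\subset G$ let $\mathrm{ms}(A)=\max_{c\in G}\mu(A\cap(2c-A))$ (symmetry with respect to central symmetries $x\mapsto 2c-x$) and $\widetilde{\mathrm{ms}}(A)=\max_{c\in G}\mu(A\cap(c-A))$ (symmetry with respect to quasi-central symmetries $x\mapsto c-x$). For an integer $r\ge1$, $\mathrm{ms}_r(G)=\min_\chi\max_{i<r}\mathrm{ms}(\chi^{-1}(i))$ and $\widetilde{\mathrm{ms}}_r(G)=\min_\chi\max_{i<r}\widetilde{\mathrm{ms}}(\chi^{-1}(i))$, the minima over all colorings $\chi:G\to\{0,\dots,r-1\}$. *)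

theory Defs
  imports Complex_Main
begin

definition mu :: "'a::{ab_group_add,finite} set \<Rightarrow> real" where
  "mu A = real (card A) / real (card (UNIV :: 'a set))"

definition ms :: "'a::{ab_group_add,finite} set \<Rightarrow> real" where
  "ms A = Max ((\<lambda>c. mu (A \<inter> (\<lambda>a. (c + c) - a) ` A)) ` UNIV)"

definition ms_tilde :: "'a::{ab_group_add,finite} set \<Rightarrow> real" where
  "ms_tilde A = Max ((\<lambda>c. mu (A \<inter> (\<lambda>a. c - a) ` A)) ` UNIV)"

definition colorings :: "nat \<Rightarrow> ('a::{ab_group_add,finite} \<Rightarrow> nat) set" where
  "colorings r = {\<chi>. \<forall>x. \<chi> x < r}"

definition ms_r :: "nat \<Rightarrow> 'a::{ab_group_add,finite} itself \<Rightarrow> real" where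
  "ms_r r G = Min ((\<lambda>\<chi>::'a \<Rightarrow> nat. Max ((\<lambda>i. ms (\<chi> -` {i})) ` {..<r})) ` colorings r)"

definition ms_tilde_r :: "nat \<Rightarrow> 'a::{ab_group_add,finite} itself \<Rightarrow> real" where
  "ms_tilde_r r G = Min ((\<lambda>\<chi>::'a \<Rightarrow> nat. Max ((\<lambda>i. ms_tilde (\<chi> -` {i})) ` {..<r})) ` colorings r)"

end

theory Submission imports Defs "HOL-Library.FuncSet" begin

lemma sum_const_involutive:
  fixes x :: "'a::ab_group_add"
  assumes "x + x = 0" "finite S"
  shows "sum (\<lambda>_. x) S = (if even (card S) then 0 else x)"
  using assms(2)
proof (induction S rule: finite_induct)
  case empty then show ?case by simp
next
  case (insert y F)
  then show ?case using assms(1) by (auto simp: add.commute)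
qed

lemma order2_trivial:
  fixes x :: "'a::{ab_group_add,finite}"
  assumes odd: "odd (card (UNIV :: 'a set))" and x: "x + x = 0"
  shows "x = 0"
proof -
  have "(\<Sum>y\<in>UNIV. y + x) = (\<Sum>y\<in>UNIV. y)"
  proof -
    have "bij (\<lambda>y::'a. y + x)" by (rule bijI') (auto intro: exI[of _ "_ - x"])
    then show ?thesis using sum.reindex_bij_betw[of "\<lambda>y::'a. y + x" UNIV UNIV "\<lambda>y. y"] by simp
  qed
  hence "sum (\<lambda>_. x) (UNIV::'a set) = 0" by (simp add: sum.distrib)
  moreover have "sum (\<lambda>_. x) (UNIV::'a set) = x" using sum_const_involutive[OF x, of "UNIV::'a set"] odd by simp
  ultimately show ?thesis by simp
qed

lemma double_inj:
  assumes "odd (card (UNIV :: 'a::{ab_group_add,finite} set))"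
  shows "inj (\<lambda>c::'a. c + c)"
proof (rule injI)
  fix c d :: 'a assume "c + c = d + d"
  hence "(c - d) + (c - d) = 0" by (simp add: algebra_simps)
  hence "c - d = 0" using order2_trivial[OF assms] by blast
  thus "c = d" by simp
qed

lemma double_surj:
  assumes "odd (card (UNIV :: 'a::{ab_group_add,finite} set))"
  shows "range (\<lambda>c::'a. c + c) = UNIV"
  using finite_UNIV_inj_surj[OF _ double_inj[OF assms]] by simp

lemma ms_eq:
  assumes "odd (card (UNIV :: 'a::{ab_group_add,finite} set))"
  shows "ms (A::'a set) = ms_tilde A"
proof -
  have "(\<lambda>c. mu (A \<inter> (\<lambda>a. (c + c) - a) ` A)) ` UNIV
      = (\<lambda>c. mu (A \<inter> (\<lambda>a. c - a) ` A)) ` ((\<lambda>c::'a. c + c) ` UNIV)"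
    by (simp add: image_image)
  then show ?thesis unfolding ms_def ms_tilde_def using double_surj[OF assms] by simp
qed

lemma parity_invol:
  assumes "finite S" "\<And>x. x \<in> S \<Longrightarrow> s x \<in> S" "\<And>x. x \<in> S \<Longrightarrow> s (s x) = x"
  shows "even (card S) = even (card {x\<in>S. s x = x})"
  using assms
proof (induction "card S" arbitrary: S rule: less_induct)
  case less
  show ?case
  proof (cases "\<exists>x\<in>S. s x \<noteq> x")
    case False
    then have "{x\<in>S. s x = x} = S" by auto
    then show ?thesis by simp
  next
    case True
    then obtain x where x: "x \<in> S" "s x \<noteq> x" by auto
    define T where "T = S - {x, s x}"
    have sub: "{x, s x} \<subseteq> S" using x less.prems by auto
    have c2: "card {x, s x} = 2" using x by auto
    have "card {x, s x} \<le> card S" using card_mono[OF less.prems(1) sub] .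
    hence cT: "card S = card T + 2" unfolding T_def
      using card_Diff_subset[OF _ sub] c2 by auto
    have clos: "s y \<in> T" if "y \<in> T" for y
    proof -
      have y: "y \<in> S" "y \<noteq> x" "y \<noteq> s x" using that unfolding T_def by auto
      have ss: "s (s y) = y" "s (s x) = x" using less.prems(3) y(1) x(1) by auto
      have "s y \<noteq> x" using ss y(3) by auto
      moreover have "s y \<noteq> s x" using ss y(2) by metis
      ultimately show ?thesis unfolding T_def using less.prems(2)[OF y(1)] by auto
    qed
    have ih: "even (card T) = even (card {y\<in>T. s y = y})"
    proof (rule less.hyps)
      show "card T < card S" using cT by simp
      show "finite T" unfolding T_def using less.prems(1) by simp
      show "\<And>y. y \<in> T \<Longrightarrow> s y \<in> T" by (rule clos)
      show "\<And>y. y \<in> T \<Longrightarrow> s (s y) = y" unfolding T_def using less.prems(3) by auto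
    qed
    have "{y\<in>T. s y = y} = {y\<in>S. s y = y}" unfolding T_def using x less.prems by auto
    then show ?thesis using ih cT by simp
  qed
qed

lemma img: "(\<lambda>a. c - a) ` A = {x. c - x \<in> (A::'a::ab_group_add set)}"
proof
  show "(\<lambda>a. c - a) ` A \<subseteq> {x. c - x \<in> A}" by auto
  show "{x. c - x \<in> A} \<subseteq> (\<lambda>a. c - a) ` A"
  proof
    fix x assume "x \<in> {x. c - x \<in> A}"
    hence "c - x \<in> A" by simp
    moreover have "x = c - (c - x)" by simp
    ultimately show "x \<in> (\<lambda>a. c - a) ` A" by (rule rev_image_eqI)
  qed
qed

lemma inter_eq: "A \<inter> (\<lambda>a. c - a) ` A = {a\<in>A. c - a \<in> (A::'a::ab_group_add set)}"
  unfolding img by auto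

lemma sum_F:
  fixes A :: "'a::{ab_group_add,finite} set"
  shows "(\<Sum>c\<in>UNIV. card (A \<inter> (\<lambda>a. c - a) ` A)) = card A * card A"
proof -
  have "(\<Sum>c\<in>UNIV. card (A \<inter> (\<lambda>a. c - a) ` A)) = (\<Sum>c\<in>UNIV. \<Sum>a\<in>A. if c - a \<in> A then 1 else (0::nat))"
    by (rule sum.cong[OF refl], simp only: inter_eq) (simp add: sum.If_cases Int_def)
  also have "\<dots> = (\<Sum>a\<in>A. \<Sum>c\<in>UNIV. if c - a \<in> A then 1 else (0::nat))"
    by (rule sum.swap)
  also have "\<dots> = (\<Sum>a\<in>A. card A)"
  proof (rule sum.cong[OF refl])
    fix a assume "a \<in> A"
    have "(\<Sum>c\<in>UNIV. if c - a \<in> A then 1 else (0::nat)) = card {c. c - a \<in> A}"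
      by (simp add: sum.If_cases)
    also have "{c. c - a \<in> A} = (\<lambda>x. x + a) ` A"
    proof
      show "{c. c - a \<in> A} \<subseteq> (\<lambda>x. x + a) ` A"
      proof
        fix c assume "c \<in> {c. c - a \<in> A}"
        hence "c - a \<in> A" by simp
        moreover have "c = (c - a) + a" by simp
        ultimately show "c \<in> (\<lambda>x. x + a) ` A" by (rule rev_image_eqI)
      qed
    qed auto
    also have "card \<dots> = card A" by (rule card_image) (auto simp: inj_on_def)
    finally show "(\<Sum>c\<in>UNIV. if c - a \<in> A then 1 else (0::nat)) = card A" .
  qed
  finally show ?thesis by simp
qed

lemma parity_F:
  fixes A :: "'a::{ab_group_add,finite} set"
  assumes odd: "odd (card (UNIV :: 'a set))"
  shows "even (card (A \<inter> (\<lambda>a. (c+c) - a) ` A)) = (c \<notin> A)"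
proof -
  let ?S = "A \<inter> (\<lambda>a. (c+c) - a) ` A"
  have "even (card ?S) = even (card {x\<in>?S. (c+c) - x = x})"
    by (rule parity_invol) (auto simp: img)
  also have "{x\<in>?S. (c+c) - x = x} = (if c \<in> A then {c} else {})"
  proof -
    have "(c+c) - x = x \<longleftrightarrow> x = c" for x
    proof
      assume "(c+c) - x = x"
      hence "x + x = c + c" by (simp add: algebra_simps eq_diff_eq)
      thus "x = c" using double_inj[OF odd] by (auto dest: injD)
    qed simp
    thus ?thesis by (auto simp: img)
  qed
  finally show ?thesis by simp
qed

lemma sq_inj: "(x::nat)*x = y*y \<Longrightarrow> x = y"
proof (rule ccontr)
  assume e: "x*x = y*y" and "x \<noteq> y"
  then consider "x < y" | "y < x" by linarith
  then show False
  proof cases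
    case 1 then have "x*x < y*y" by (simp add: mult_strict_mono')
    with e show False by simp
  next
    case 2 then have "y*y < x*x" by (simp add: mult_strict_mono')
    with e show False by simp
  qed
qed

lemma key:
  fixes A :: "'a::{ab_group_add,finite} set"
  assumes odd: "odd (card (UNIV :: 'a set))" and r: "r \<ge> 2"
    and big: "card (UNIV::'a set) \<le> r * card A"
  shows "\<exists>c. card (UNIV::'a set) < r^2 * card (A \<inter> (\<lambda>a. c - a) ` A)"
proof (rule ccontr)
  let ?n = "card (UNIV::'a set)"
  let ?F = "\<lambda>c. card (A \<inter> (\<lambda>a. c - a) ` A)"
  assume "\<not> ?thesis"
  hence le: "\<And>c. r^2 * ?F c \<le> ?n" by (simp add: not_less)
  have "r^2 * (card A * card A) = (\<Sum>c\<in>UNIV. r^2 * ?F c)"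
    by (simp only: sum_distrib_left[symmetric] sum_F)
  also have "\<dots> \<le> (\<Sum>c\<in>(UNIV::'a set). ?n)" by (rule sum_mono) (use le in auto)
  also have "\<dots> = ?n * ?n" by simp
  finally have A1: "r^2 * (card A * card A) \<le> ?n * ?n" .
  have "?n * ?n \<le> (r * card A) * (r * card A)" using big by (simp add: mult_le_mono)
  hence eqs: "?n * ?n = r^2 * (card A * card A)" using A1 by (simp add: power2_eq_square algebra_simps)
  hence "?n * ?n = (r * card A) * (r * card A)" by (simp add: power2_eq_square algebra_simps)
  hence nr: "?n = r * card A" by (rule sq_inj)
  have allc: "r^2 * ?F c = ?n" for c
  proof -
    have "(\<Sum>c\<in>UNIV. r^2 * ?F c) = (\<Sum>c\<in>(UNIV::'a set). ?n)"
      using eqs by (simp only: sum_distrib_left[symmetric] sum_F) simp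
    thus ?thesis by (rule sum_mono_inv) (use le in auto)
  qed
  have npos: "?n > 0" by (simp add: card_gt_0_iff)
  hence "card A > 0" using nr by (cases "card A") auto
  hence "A \<noteq> {}" by auto
  then obtain a where a: "a \<in> A" by blast
  have "card A < ?n" using nr r \<open>card A > 0\<close> by simp
  hence "A \<noteq> UNIV" by auto
  then obtain b where b: "b \<notin> A" by blast
  have "r^2 * ?F (a+a) = r^2 * ?F (b+b)" using allc[of "a+a"] allc[of "b+b"] by simp
  moreover have "r^2 \<noteq> 0" using r by simp
  ultimately have "?F (a+a) = ?F (b+b)" by simp
  moreover have "odd (?F (a+a))" using parity_F[OF odd, of A a] a by simp
  moreover have "even (?F (b+b))" using parity_F[OF odd, of A b] b by simp
  ultimately show False by simp
qed


lemma finite_colorings: "finite (colorings r :: ('a::{ab_group_add,finite} \<Rightarrow> nat) set)"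
proof -
  have "colorings r = (Pi\<^sub>E (UNIV::'a set) (\<lambda>_. {..<r}))"
    unfolding colorings_def PiE_UNIV_domain by (auto simp: Pi_def)
  thus ?thesis by (simp add: finite_PiE)
qed

lemma ms_tilde_big:
  fixes A :: "'a::{ab_group_add,finite} set"
  assumes odd: "odd (card (UNIV :: 'a set))" and r: "r \<ge> 2"
    and big: "card (UNIV::'a set) \<le> r * card A"
  shows "1 / real r ^ 2 < ms_tilde A"
proof -
  obtain c where c: "card (UNIV::'a set) < r^2 * card (A \<inter> (\<lambda>a. c - a) ` A)"
    using key[OF odd r big] by blast
  let ?n = "real (card (UNIV::'a set))"
  have n: "?n > 0" by (simp add: card_gt_0_iff)
  have rr: "real r ^ 2 > 0" using r by simp
  have "?n < real r ^ 2 * real (card (A \<inter> (\<lambda>a. c - a) ` A))"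
  proof -
    have "real (card (UNIV::'a set)) < real (r^2 * card (A \<inter> (\<lambda>a. c - a) ` A))"
      using c by (simp only: of_nat_less_iff)
    thus ?thesis by simp
  qed
  hence "1 / real r ^ 2 < mu (A \<inter> (\<lambda>a. c - a) ` A)"
    unfolding mu_def using n rr by (simp add: field_simps)
  thus ?thesis unfolding ms_tilde_def by (subst Max_gr_iff) auto
qed

lemma pigeon:
  fixes \<chi> :: "'a::{ab_group_add,finite} \<Rightarrow> nat"
  assumes "\<chi> \<in> colorings r" "r > 0"
  shows "\<exists>i<r. card (UNIV::'a set) \<le> r * card (\<chi> -` {i})"
proof (rule ccontr)
  assume "\<not> ?thesis"
  hence lt: "\<And>i. i < r \<Longrightarrow> r * card (\<chi> -` {i}) < card (UNIV::'a set)" by auto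
  have U: "(UNIV::'a set) = (\<Union>i\<in>{..<r}. \<chi> -` {i})" using assms(1) by (auto simp: colorings_def)
  have "card (\<Union>i\<in>{..<r}. \<chi> -` {i}) = (\<Sum>i<r. card (\<chi> -` {i}))"
    by (rule card_UN_disjoint) auto
  hence "card (UNIV::'a set) = (\<Sum>i<r. card (\<chi> -` {i}))" using U by simp
  hence "r * card (UNIV::'a set) = (\<Sum>i<r. r * card (\<chi> -` {i}))" by (simp only: sum_distrib_left)
  also have "\<dots> < (\<Sum>i<r. card (UNIV::'a set))"
    by (rule sum_strict_mono) (use assms(2) lt in auto)
  also have "\<dots> = r * card (UNIV::'a set)" by simp
  finally show False by simp
qed

theorem theorem7p6:
  fixes r :: nat
  assumes "odd (card (UNIV :: 'a::{ab_group_add,finite} set))"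
    and "r \<ge> 2"
  shows "ms_r r TYPE('a) = ms_tilde_r r TYPE('a) \<and> ms_tilde_r r TYPE('a) > 1 / real r ^ 2"
proof
  have e: "ms = (ms_tilde :: 'a set \<Rightarrow> real)" using ms_eq[OF assms(1)] by (rule ext)
  show "ms_r r TYPE('a) = ms_tilde_r r TYPE('a)" unfolding ms_r_def ms_tilde_r_def e ..
  have ne: "(\<lambda>_. 0) \<in> (colorings r :: ('a \<Rightarrow> nat) set)" using assms(2) by (simp add: colorings_def)
  show "ms_tilde_r r TYPE('a) > 1 / real r ^ 2"
    unfolding ms_tilde_r_def
  proof (subst Min_gr_iff, simp add: finite_colorings, use ne in blast, intro ballI)
    fix y assume "y \<in> (\<lambda>\<chi>::'a \<Rightarrow> nat. Max ((\<lambda>i. ms_tilde (\<chi> -` {i})) ` {..<r})) ` colorings r"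
    then obtain \<chi> :: "'a \<Rightarrow> nat" where \<chi>: "\<chi> \<in> colorings r" and y: "y = Max ((\<lambda>i. ms_tilde (\<chi> -` {i})) ` {..<r})" by blast
    obtain i where i: "i < r" "card (UNIV::'a set) \<le> r * card (\<chi> -` {i})"
      using pigeon[OF \<chi>] assms(2) by auto
    have "1 / real r ^ 2 < ms_tilde (\<chi> -` {i})" by (rule ms_tilde_big[OF assms(1) assms(2) i(2)])
    thus "1 / real r ^ 2 < y" unfolding y using i(1) by (subst Max_gr_iff) auto
  qed
qed

end
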